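(* Let $G$ be an undirected graph, $D\ge1$ an integer, and let $G^D$ denote the graph on $V(G)$ in which distinct vertices $u,v$ are adjacent iff $G$ contains a path of length at most $D$ between them. Let $v_1,\ldots,v_k$ be an independent set in $G^D$. Let $(s,t)$ be a pair of vertices with $(s,t)\notin E(G)$, let $G'=(V(G),E(G)\cup\{(s,t)\})$, and let $H'$ be the subgraph of $(G')^D$ induced by $\{v_1,\ldots,v_k\}$. Then there exists $i\in\{1,\ldots,k\}$ such that every edge of $H'$ (if any) is incident to $v_i$. In particular, if $G^D$ has an independent set of size $k$, then $(G')^D$ has an independent set of size $k-1$. *)

theory Defs
  imports Main
begin

definition ugraph :: "'a set \<Rightarrow> 'a set set \<Rightarrow> bool" where
  "ugraph V E \<longleftrightarrow> (\<forall>e\<in>E. \<exists>u v. e = {u, v} \<and> u \<noteq> v \<and> u \<in> V \<and> v \<in> V)"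

text \<open>A path is a nonempty list of distinct vertices, consecutive ones adjacent;
  its length is the number of edges, i.e. length p - 1.\<close>
definition is_path :: "'a set \<Rightarrow> 'a set set \<Rightarrow> 'a list \<Rightarrow> bool" where
  "is_path V E p \<longleftrightarrow> p \<noteq> [] \<and> distinct p \<and> set p \<subseteq> V \<and>
     (\<forall>i. Suc i < length p \<longrightarrow> {p ! i, p ! Suc i} \<in> E)"

definition power_edges :: "'a set \<Rightarrow> 'a set set \<Rightarrow> nat \<Rightarrow> 'a set set" where
  "power_edges V E D = {{u, v} | u v. u \<in> V \<and> v \<in> V \<and> u \<noteq> v \<and>
     (\<exists>p. is_path V E p \<and> hd p = u \<and> last p = v \<and> length p - 1 \<le> D)}"

definition independent :: "'a set \<Rightarrow> 'a set set \<Rightarrow> 'a set \<Rightarrow> bool" where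
  "independent V E I \<longleftrightarrow> I \<subseteq> V \<and> (\<forall>u\<in>I. \<forall>v\<in>I. u \<noteq> v \<longrightarrow> {u, v} \<notin> E)"

end

theory Submission
  imports Defs
begin

fun walkE :: "'a set set \<Rightarrow> 'a list \<Rightarrow> bool" where
  "walkE E [] = True"
| "walkE E [x] = True"
| "walkE E (x # y # xs) = ({x, y} \<in> E \<and> walkE E (y # xs))"

lemma walkE_nth: "walkE E p \<longleftrightarrow> (\<forall>i. Suc i < length p \<longrightarrow> {p!i, p!Suc i} \<in> E)"
proof (induction E p rule: walkE.induct)
  case (3 E x y xs)
  show ?case
  proof
    assume "walkE E (x # y # xs)"
    then show "\<forall>i. Suc i < length (x # y # xs) \<longrightarrow> {(x # y # xs) ! i, (x # y # xs) ! Suc i} \<in> E"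
      using 3 by (auto simp: nth_Cons split: nat.splits)
  next
    assume H: "\<forall>i. Suc i < length (x # y # xs) \<longrightarrow> {(x # y # xs) ! i, (x # y # xs) ! Suc i} \<in> E"
    have "{x,y} \<in> E" using H[rule_format, of 0] by simp
    moreover have "\<forall>i. Suc i < length (y # xs) \<longrightarrow> {(y # xs) ! i, (y # xs) ! Suc i} \<in> E"
    proof (intro allI impI)
      fix i assume "Suc i < length (y # xs)"
      then show "{(y # xs) ! i, (y # xs) ! Suc i} \<in> E" using H[rule_format, of "Suc i"] by simp
    qed
    ultimately show "walkE E (x # y # xs)" using 3 by simp
  qed
qed auto

lemma walkE_split: "walkE E (xs @ y # ys) \<longleftrightarrow> walkE E (xs @ [y]) \<and> walkE E (y # ys)"
proof (induction xs)
  case Nil then show ?case by simp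
next
  case (Cons a xs) then show ?case by (cases xs) auto
qed

lemma walkE_rev: "walkE E (rev xs) = walkE E xs"
proof (induction E xs rule: walkE.induct)
  case (3 E x y xs)
  have "walkE E (rev (x # y # xs)) = walkE E (rev xs @ y # [x])" by simp
  also have "\<dots> = (walkE E (rev xs @ [y]) \<and> walkE E [y, x])" by (rule walkE_split)
  also have "\<dots> = (walkE E (y # xs) \<and> {x, y} \<in> E)"
    using 3 by (simp add: insert_commute)
  finally show ?case by auto
qed auto

definition R :: "'a set \<Rightarrow> 'a set set \<Rightarrow> nat \<Rightarrow> 'a \<Rightarrow> 'a \<Rightarrow> bool" where
  "R V E n a b \<longleftrightarrow> (\<exists>w. w \<noteq> [] \<and> set w \<subseteq> V \<and> walkE E w \<and> hd w = a \<and> last w = b \<and> length w \<le> Suc n)"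

lemma R_refl: "a \<in> V \<Longrightarrow> R V E 0 a a"
  unfolding R_def by (rule exI[of _ "[a]"]) auto

lemma R_mono: "R V E n a b \<Longrightarrow> n \<le> m \<Longrightarrow> R V E m a b"
  unfolding R_def using Suc_le_mono le_trans by blast

lemma R_step: "{x, y} \<in> E \<Longrightarrow> x \<in> V \<Longrightarrow> R V E n y b \<Longrightarrow> R V E (Suc n) x b"
  unfolding R_def
proof (elim exE conjE)
  fix w assume "{x,y} \<in> E" "x \<in> V" "w \<noteq> []" "set w \<subseteq> V" "walkE E w" "hd w = y" "last w = b" "length w \<le> Suc n"
  then show "\<exists>w. w \<noteq> [] \<and> set w \<subseteq> V \<and> walkE E w \<and> hd w = x \<and> last w = b \<and> length w \<le> Suc (Suc n)"
    by (intro exI[of _ "x # w"]) (cases w, auto)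
qed

lemma R_sym: "R V E n a b \<Longrightarrow> R V E n b a"
  unfolding R_def
  by (metis hd_rev last_rev length_rev rev_is_Nil_conv set_rev walkE_rev)

lemma R_trans: "R V E m a b \<Longrightarrow> R V E n b c \<Longrightarrow> R V E (m + n) a c"
  unfolding R_def
proof (elim exE conjE)
  fix w1 w2 assume A: "w1 \<noteq> []" "set w1 \<subseteq> V" "walkE E w1" "hd w1 = a" "last w1 = b" "length w1 \<le> Suc m"
    and B: "w2 \<noteq> []" "set w2 \<subseteq> V" "walkE E w2" "hd w2 = b" "last w2 = c" "length w2 \<le> Suc n"
  obtain w1' where w1: "w1 = w1' @ [b]" using A by (metis append_butlast_last_id)
  obtain w2' where w2: "w2 = b # w2'" using B by (metis list.collapse)
  have "walkE E (w1' @ b # w2')" using A B w1 w2 walkE_split by metis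
  moreover have "hd (w1' @ b # w2') = a" using A w1 by (cases w1') auto
  moreover have "last (w1' @ b # w2') = c" using B w2 by (cases w2') auto
  ultimately show "\<exists>w. w \<noteq> [] \<and> set w \<subseteq> V \<and> walkE E w \<and> hd w = a \<and> last w = c \<and> length w \<le> Suc (m + n)"
    using A B w1 w2 by (intro exI[of _ "w1' @ b # w2'"]) auto
qed

lemma walk_to_path:
  "w \<noteq> [] \<Longrightarrow> set w \<subseteq> V \<Longrightarrow> walkE E w \<Longrightarrow>
   \<exists>p. p \<noteq> [] \<and> distinct p \<and> set p \<subseteq> V \<and> walkE E p \<and> hd p = hd w \<and> last p = last w \<and> length p \<le> length w"
proof (induction "length w" arbitrary: w rule: less_induct)
  case less
  show ?case
  proof (cases "distinct w")
    case True then show ?thesis using less.prems by blast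
  next
    case False
    then obtain xs x ys zs where w: "w = xs @ [x] @ ys @ [x] @ zs"
      using not_distinct_decomp by blast
    define w' where "w' = xs @ x # zs"
    have "walkE E (xs @ [x])" "walkE E (x # ys @ x # zs)"
      using less.prems(3) walkE_split[of E xs x "ys @ x # zs"] w by auto
    moreover have "walkE E (x # zs)"
      using calculation(2) walkE_split[of E "x # ys" x zs] by auto
    ultimately have wk: "walkE E w'" unfolding w'_def using walkE_split by metis
    have "length w' < length w" unfolding w'_def w by simp
    moreover have "w' \<noteq> []" "set w' \<subseteq> V" using less.prems w unfolding w'_def by auto
    ultimately obtain p where p: "p \<noteq> [] \<and> distinct p \<and> set p \<subseteq> V \<and> walkE E p \<and> hd p = hd w' \<and> last p = last w' \<and> length p \<le> length w'"
      using less.hyps wk by blast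
    have "hd w' = hd w" unfolding w'_def w by (cases xs) auto
    moreover have "last w' = last w" unfolding w'_def w by (cases zs) auto
    ultimately show ?thesis using p \<open>length w' < length w\<close> by (intro exI[of _ p]) auto
  qed
qed

lemma R_path: "R V E n a b \<Longrightarrow> \<exists>p. is_path V E p \<and> hd p = a \<and> last p = b \<and> length p - 1 \<le> n"
proof -
  assume "R V E n a b"
  then obtain w where w: "w \<noteq> []" "set w \<subseteq> V" "walkE E w" "hd w = a" "last w = b" "length w \<le> Suc n"
    unfolding R_def by blast
  from walk_to_path[OF w(1-3)] obtain p where
    p: "p \<noteq> []" "distinct p" "set p \<subseteq> V" "walkE E p" "hd p = hd w" "last p = last w" "length p \<le> length w"
    by blast
  have "is_path V E p" unfolding is_path_def walkE_nth[symmetric] using p by blast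
  moreover have "length p - 1 \<le> n" using p w by linarith
  ultimately show ?thesis using p w by blast
qed

lemma close:
  assumes "independent V (power_edges V E D) I" "a \<in> I" "b \<in> I" "R V E n a b" "n \<le> D"
  shows "a = b"
proof (rule ccontr)
  assume ne: "a \<noteq> b"
  from R_path[OF assms(4)] obtain p where p: "is_path V E p" "hd p = a" "last p = b" "length p - 1 \<le> n" by blast
  have I: "I \<subseteq> V" "\<forall>u\<in>I. \<forall>v\<in>I. u \<noteq> v \<longrightarrow> {u, v} \<notin> power_edges V E D"
    using assms(1) unfolding independent_def by simp_all
  have "a \<in> V" "b \<in> V" using I(1) assms(2,3) by auto
  then have h: "a \<in> V \<and> b \<in> V \<and> a \<noteq> b \<and> (\<exists>p. is_path V E p \<and> hd p = a \<and> last p = b \<and> length p - 1 \<le> D)"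
    using p ne assms(5) by (intro conjI exI[of _ p]) auto
  have "{a, b} \<in> power_edges V E D"
    unfolding power_edges_def mem_Collect_eq
    apply (rule exI[of _ a], rule exI[of _ b])
    using h by (simp only: simp_thms)
  then show False using I(2) assms(2,3) ne by blast
qed

lemma decomp:
  "w \<noteq> [] \<Longrightarrow> set w \<subseteq> V \<Longrightarrow> walkE (insert {s,t} E) w \<Longrightarrow>
   R V E (length w - 1) (hd w) (last w)
   \<or> (\<exists>m n. m + n + 1 \<le> length w - 1 \<and> R V E m (hd w) s \<and> R V E n t (last w))
   \<or> (\<exists>m n. m + n + 1 \<le> length w - 1 \<and> R V E m (hd w) t \<and> R V E n s (last w))"
proof (induction w)
  case Nil then show ?case by simp
next
  case (Cons x w)
  show ?case
  proof (cases w)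
    case Nil then show ?thesis using Cons.prems R_refl by fastforce
  next
    case (Cons y w'')
    have xV: "x \<in> V" using Cons.prems by auto
    have ed: "{x, y} \<in> insert {s,t} E" and wk: "walkE (insert {s,t} E) w"
      using Cons.prems \<open>w = y # w''\<close> by auto
    have IH: "R V E (length w - 1) y (last w)
     \<or> (\<exists>m n. m + n + 1 \<le> length w - 1 \<and> R V E m y s \<and> R V E n t (last w))
     \<or> (\<exists>m n. m + n + 1 \<le> length w - 1 \<and> R V E m y t \<and> R V E n s (last w))"
      using Cons.IH wk Cons.prems \<open>w = y # w''\<close> by auto
    have L: "length (x # w) - 1 = Suc (length w - 1)" using \<open>w = y # w''\<close> by simp
    have hl: "hd (x # w) = x" "last (x # w) = last w" using \<open>w = y # w''\<close> by auto
    from ed consider "{x,y} \<in> E" | "x = s \<and> y = t" | "x = t \<and> y = s"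
      by (auto simp: doubleton_eq_iff)
    then show ?thesis
    proof (cases)
      case 1
      from IH show ?thesis
      proof (elim disjE exE conjE)
        assume "R V E (length w - 1) y (last w)"
        then show ?thesis unfolding L hl using R_step[OF 1 xV] by blast
      next
        fix m n assume "m + n + 1 \<le> length w - 1" "R V E m y s" "R V E n t (last w)"
        then show ?thesis unfolding L hl using R_step[OF 1 xV, of m s]
          by (intro disjI2 disjI1 exI[of _ "Suc m"] exI[of _ n]) auto
      next
        fix m n assume "m + n + 1 \<le> length w - 1" "R V E m y t" "R V E n s (last w)"
        then show ?thesis unfolding L hl using R_step[OF 1 xV, of m t]
          by (intro disjI2 disjI2 exI[of _ "Suc m"] exI[of _ n]) auto
      qed
    next
      case 2
      have R0: "R V E 0 x s" using R_refl[OF xV, of E] 2 by simp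
      from IH show ?thesis
      proof (elim disjE exE conjE)
        assume "R V E (length w - 1) y (last w)"
        then show ?thesis unfolding L hl using R0 2
          by (intro disjI2 disjI1 exI[of _ 0] exI[of _ "length w - 1"]) auto
      next
        fix m n assume "m + n + 1 \<le> length w - 1" "R V E m y s" "R V E n t (last w)"
        then show ?thesis unfolding L hl using R0 2
          by (intro disjI2 disjI1 exI[of _ 0] exI[of _ n]) auto
      next
        fix m n assume "m + n + 1 \<le> length w - 1" "R V E m y t" "R V E n s (last w)"
        then show ?thesis unfolding L hl using 2 R_mono[of V E n s "last w" "Suc (length w - 1)"]
          by auto
      qed
    next
      case 3
      have R0: "R V E 0 x t" using R_refl[OF xV, of E] 3 by simp
      from IH show ?thesis
      proof (elim disjE exE conjE)
        assume "R V E (length w - 1) y (last w)"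
        then show ?thesis unfolding L hl using R0 3
          by (intro disjI2 disjI2 exI[of _ 0] exI[of _ "length w - 1"]) auto
      next
        fix m n assume "m + n + 1 \<le> length w - 1" "R V E m y s" "R V E n t (last w)"
        then show ?thesis unfolding L hl using 3 R_mono[of V E n t "last w" "Suc (length w - 1)"]
          by auto
      next
        fix m n assume "m + n + 1 \<le> length w - 1" "R V E m y t" "R V E n s (last w)"
        then show ?thesis unfolding L hl using R0 3
          by (intro disjI2 disjI2 exI[of _ 0] exI[of _ n]) auto
      qed
    qed
  qed
qed

lemma edge_ori:
  assumes indep: "independent V (power_edges V E D) I"
    and e: "e \<in> power_edges V (insert {s,t} E) D" and eI: "e \<subseteq> I"
  shows "\<exists>x y. e = {x,y} \<and> x \<in> I \<and> y \<in> I \<and> x \<noteq> y \<and> (\<exists>m n. m + n + 1 \<le> D \<and> R V E m x s \<and> R V E n t y)"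
proof -
  from e obtain u v p where uv: "e = {u,v}" "u \<in> V" "v \<in> V" "u \<noteq> v"
    and p: "is_path V (insert {s,t} E) p" "hd p = u" "last p = v" "length p - 1 \<le> D"
    unfolding power_edges_def mem_Collect_eq by (elim exE conjE) simp
  have uI: "u \<in> I" "v \<in> I" using eI uv by auto
  have pw: "p \<noteq> []" "set p \<subseteq> V" "walkE (insert {s,t} E) p"
    using p(1) unfolding is_path_def walkE_nth[symmetric] by simp_all
  from decomp[OF pw] p(2,3)
  have "R V E (length p - 1) u v
   \<or> (\<exists>m n. m + n + 1 \<le> length p - 1 \<and> R V E m u s \<and> R V E n t v)
   \<or> (\<exists>m n. m + n + 1 \<le> length p - 1 \<and> R V E m u t \<and> R V E n s v)" by simp
  then show ?thesis
  proof (elim disjE exE conjE)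
    assume "R V E (length p - 1) u v"
    then have "u = v" using close[OF indep uI] p(4) by blast
    then show ?thesis using uv by simp
  next
    fix m n assume "m + n + 1 \<le> length p - 1" "R V E m u s" "R V E n t v"
    note hh = this
    have "m + n + 1 \<le> D" using hh(1) p(4) by linarith
    then have "\<exists>m n. m + n + 1 \<le> D \<and> R V E m u s \<and> R V E n t v" using hh(2,3) by blast
    then have "e = {u,v} \<and> u \<in> I \<and> v \<in> I \<and> u \<noteq> v \<and> (\<exists>m n. m + n + 1 \<le> D \<and> R V E m u s \<and> R V E n t v)"
      using uv uI by (intro conjI) simp_all
    note F = this
    show ?thesis by (rule exI[of _ u], rule exI[of _ v], rule F)
  next
    fix m n assume "m + n + 1 \<le> length p - 1" "R V E m u t" "R V E n s v"
    note hh = this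
    have "n + m + 1 \<le> D" using hh(1) p(4) by linarith
    then have "\<exists>m n. m + n + 1 \<le> D \<and> R V E m v s \<and> R V E n t u" using R_sym[OF hh(2)] R_sym[OF hh(3)] by blast
    moreover have "e = {v,u}" using uv(1) by (simp add: insert_commute)
    ultimately have "e = {v,u} \<and> v \<in> I \<and> u \<in> I \<and> v \<noteq> u \<and> (\<exists>m n. m + n + 1 \<le> D \<and> R V E m v s \<and> R V E n t u)"
      using uv uI by (intro conjI) simp_all
    note F = this
    show ?thesis by (rule exI[of _ v], rule exI[of _ u], rule F)
  qed
qed

lemma pair:
  assumes indep: "independent V (power_edges V E D) I"
    and I: "x1 \<in> I" "y1 \<in> I" "x2 \<in> I" "y2 \<in> I"
    and h1: "m1 + n1 + 1 \<le> D" "R V E m1 x1 s" "R V E n1 t y1"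
    and h2: "m2 + n2 + 1 \<le> D" "R V E m2 x2 s" "R V E n2 t y2"
  shows "x1 = x2 \<or> y1 = y2"
proof (cases "m1 + m2 \<le> D")
  case True
  have "R V E (m1 + m2) x1 x2" using R_trans[OF h1(2) R_sym[OF h2(2)]] .
  then show ?thesis using close[OF indep I(1) I(3)] True by blast
next
  case False
  then have le: "n1 + n2 \<le> D" using h1(1) h2(1) by linarith
  have "R V E (n1 + n2) y1 y2" using R_trans[OF R_sym[OF h1(3)] h2(3)] .
  then show ?thesis using close[OF indep I(2) I(4)] le by blast
qed

lemma star:
  assumes indep: "independent V (power_edges V E D) I" and ne: "I \<noteq> {}"
  shows "\<exists>v\<in>I. \<forall>e\<in>{e \<in> power_edges V (insert {s, t} E) D. e \<subseteq> I}. v \<in> e"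
proof (cases "\<exists>e0. e0 \<in> power_edges V (insert {s, t} E) D \<and> e0 \<subseteq> I")
  case False
  then show ?thesis using ne by auto
next
  case True
  let ?H = "{e \<in> power_edges V (insert {s, t} E) D. e \<subseteq> I}"
  have ori: "\<And>e. e \<in> ?H \<Longrightarrow> \<exists>x y. e = {x,y} \<and> x \<in> I \<and> y \<in> I \<and> x \<noteq> y \<and> (\<exists>m n. m + n + 1 \<le> D \<and> R V E m x s \<and> R V E n t y)"
    using edge_ori[OF indep] by blast
  from True obtain e0 where "e0 \<in> ?H" by blast
  from ori[OF this] obtain a b m0 n0 where ab: "a \<in> I" "b \<in> I" "m0 + n0 + 1 \<le> D" "R V E m0 a s" "R V E n0 t b"
    by blast
  have "(\<forall>e\<in>?H. a \<in> e) \<or> (\<forall>e\<in>?H. b \<in> e)"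
  proof (rule ccontr)
    assume "\<not> ?thesis"
    then obtain e1 e2 where e1: "e1 \<in> ?H" "a \<notin> e1" and e2: "e2 \<in> ?H" "b \<notin> e2" by blast
    from ori[OF e1(1)] obtain x1 y1 m1 n1 where o1: "e1 = {x1,y1}" "x1 \<in> I" "y1 \<in> I"
      "m1 + n1 + 1 \<le> D" "R V E m1 x1 s" "R V E n1 t y1" by blast
    from ori[OF e2(1)] obtain x2 y2 m2 n2 where o2: "e2 = {x2,y2}" "x2 \<in> I" "y2 \<in> I"
      "m2 + n2 + 1 \<le> D" "R V E m2 x2 s" "R V E n2 t y2" by blast
    have "a = x1 \<or> b = y1" using pair[OF indep ab(1,2) o1(2,3) ab(3-5) o1(4-6)] .
    then have by1: "b = y1" using e1 o1 by auto
    have "a = x2 \<or> b = y2" using pair[OF indep ab(1,2) o2(2,3) ab(3-5) o2(4-6)] .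
    then have ax2: "a = x2" using e2 o2 by auto
    have "x1 = x2 \<or> y1 = y2" using pair[OF indep o1(2,3) o2(2,3) o1(4-6) o2(4-6)] .
    then show False using by1 ax2 e1 e2 o1 o2 by auto
  qed
  then show ?thesis using ab(1,2) by blast
qed

theorem mainTheorem11:
  fixes V :: "'a set" and E :: "'a set set" and D :: nat and I :: "'a set" and s t :: 'a
  assumes "ugraph V E"
    and "D \<ge> 1"
    and "finite I" and "I \<noteq> {}"
    and "independent V (power_edges V E D) I"
    and "s \<in> V" and "t \<in> V" and "s \<noteq> t" and "{s, t} \<notin> E"
  shows "(\<exists>v\<in>I. \<forall>e\<in>{e \<in> power_edges V (insert {s, t} E) D. e \<subseteq> I}. v \<in> e)
    \<and> (\<forall>k. (\<exists>J. finite J \<and> card J = k \<and> independent V (power_edges V E D) J)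
          \<longrightarrow> (\<exists>J'. finite J' \<and> card J' = k - 1 \<and>
                   independent V (power_edges V (insert {s, t} E) D) J'))"
proof (intro conjI allI impI)
  show "\<exists>v\<in>I. \<forall>e\<in>{e \<in> power_edges V (insert {s, t} E) D. e \<subseteq> I}. v \<in> e"
    using star[OF assms(5,4)] .
next
  fix k assume "\<exists>J. finite J \<and> card J = k \<and> independent V (power_edges V E D) J"
  then obtain J where J: "finite J" "card J = k" "independent V (power_edges V E D) J" by blast
  show "\<exists>J'. finite J' \<and> card J' = k - 1 \<and> independent V (power_edges V (insert {s, t} E) D) J'"
  proof (cases "J = {}")
    case True
    then show ?thesis using J by (intro exI[of _ "{}"]) (auto simp: independent_def)
  next
    case False
    from star[OF J(3) False, of s t] obtain v where v: "v \<in> J"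
      and hv: "\<forall>e\<in>{e \<in> power_edges V (insert {s, t} E) D. e \<subseteq> J}. v \<in> e" by blast
    have "independent V (power_edges V (insert {s, t} E) D) (J - {v})"
      unfolding independent_def
    proof (intro conjI ballI impI)
      show "J - {v} \<subseteq> V" using J(3) unfolding independent_def by auto
    next
      fix u w assume uw: "u \<in> J - {v}" "w \<in> J - {v}" "u \<noteq> w"
      show "{u, w} \<notin> power_edges V (insert {s, t} E) D"
      proof
        assume "{u, w} \<in> power_edges V (insert {s, t} E) D"
        moreover have "{u, w} \<subseteq> J" using uw by auto
        ultimately have "{u, w} \<in> {e \<in> power_edges V (insert {s, t} E) D. e \<subseteq> J}"
          by (intro CollectI conjI)
        from hv this have "v \<in> {u, w}" by (rule bspec)
        then show False using uw by auto
      qed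
    qed
    moreover have "card (J - {v}) = k - 1" using J v by simp
    ultimately show ?thesis using J(1) by (intro exI[of _ "J - {v}"]) auto
  qed
qed

end
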